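(* For $n\in\mathbb Z$ let $m_n=m(S_n)$ be the mean of the segment $S_n$. Then $m_n=0$ if $n$ is even; $0\leq m_n\leq 1$ if $n$ is odd and $n\geq 0$; and $-1\leq m_n\leq 0$ if $n$ is odd and $n\leq 0$.
   Context: Bipartite Influence: on a bipartite graph with black and white vertices (edges between colours), isolated vertices are credited to the owner of their colour (black to Left, white to Right); Left picks a black vertex $x$ and removes $x$, its neighbours and the vertices that become isolated (credited to her); Right likewise with white vertices; score = Left's total minus Right's. $Ls$, $Rs$ are optimal scores with Left, resp. Right, moving first. A sum of positions is their disjoint union; $pG$ is the disjoint union of $p$ copies of $G$. For $n\geq 1$, $S_n$ is the path $v_1\cdots v_n$ with $v_i$ black iff $i$ is odd; $S_{-n}$ is the path $v_1\cdots v_n$ with $v_i$ white iff $i$ is odd; $S_0$ is the empty graph. Bipartite Influence positions are dicotic nonzugzwang games, so the mean $m(G)=\lim_{p\to\infty}Ls(pG)/p=\lim_{p\to\infty}Rs(pG)/p$ exists (Milnor). *)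

theory Defs
  imports Complex_Main
begin

(* A position of Bipartite Influence: a vertex set V, a colouring (bl v = True iff v is black),
   and a symmetric edge relation E. *)
type_synonym 'v pos = "'v set \<times> ('v \<Rightarrow> bool) \<times> ('v \<Rightarrow> 'v \<Rightarrow> bool)"

definition nbhd :: "('v \<Rightarrow> 'v \<Rightarrow> bool) \<Rightarrow> 'v set \<Rightarrow> 'v \<Rightarrow> 'v set" where
  "nbhd E U x = {y \<in> U. E x y}"

definition isolated :: "('v \<Rightarrow> 'v \<Rightarrow> bool) \<Rightarrow> 'v set \<Rightarrow> 'v set" where
  "isolated E U = {v \<in> U. \<forall>w \<in> U. \<not> E v w}"

(* vertices removed (and credited to the mover) when x is picked in the induced subgraph on U:
   x, its neighbours, and the vertices that thereby become isolated *)
definition removed :: "('v \<Rightarrow> 'v \<Rightarrow> bool) \<Rightarrow> 'v set \<Rightarrow> 'v \<Rightarrow> 'v set" where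
  "removed E U x = (let R = insert x (nbhd E U x) in R \<union> isolated E (U - R))"

(* optimal score (Left minus Right) of the remaining game on vertex set U (no isolated vertices),
   player to move: Left if lft, Right otherwise; k is fuel (card U suffices, each move removes
   at least one vertex). *)
fun bival :: "('v \<Rightarrow> bool) \<Rightarrow> ('v \<Rightarrow> 'v \<Rightarrow> bool) \<Rightarrow> nat \<Rightarrow> bool \<Rightarrow> 'v set \<Rightarrow> int" where
  "bival bl E 0 lft U = 0"
| "bival bl E (Suc k) lft U =
     (let M = {x \<in> U. bl x = lft} in
      if M = {} then 0
      else if lft then
        Max ((\<lambda>x. int (card (removed E U x)) + bival bl E k False (U - removed E U x)) ` M)
      else
        Min ((\<lambda>x. bival bl E k True (U - removed E U x) - int (card (removed E U x))) ` M))"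

definition iso_credit :: "'v pos \<Rightarrow> int" where
  "iso_credit G = (case G of (V, bl, E) \<Rightarrow>
     int (card {v \<in> isolated E V. bl v}) - int (card {v \<in> isolated E V. \<not> bl v}))"

definition Ls :: "'v pos \<Rightarrow> int" where
  "Ls G = (case G of (V, bl, E) \<Rightarrow> iso_credit G + bival bl E (card V) True (V - isolated E V))"

definition Rs :: "'v pos \<Rightarrow> int" where
  "Rs G = (case G of (V, bl, E) \<Rightarrow> iso_credit G + bival bl E (card V) False (V - isolated E V))"

definition copies :: "nat \<Rightarrow> 'v pos \<Rightarrow> (nat \<times> 'v) pos" where
  "copies p G = (case G of (V, bl, E) \<Rightarrow>
     ({0..<p} \<times> V, (\<lambda>(c, v). bl v), (\<lambda>(c, v) (d, w). c = d \<and> E v w)))"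

definition mean :: "'v pos \<Rightarrow> real" where
  "mean G = lim (\<lambda>p. real_of_int (Ls (copies p G)) / real p)"

definition segment :: "int \<Rightarrow> nat pos" where
  "segment n = ({1..nat \<bar>n\<bar>},
                (\<lambda>i. if n > 0 then odd i else even i),
                (\<lambda>i j. i = j + 1 \<or> j = i + 1))"

end

theory Submission
  imports Defs
begin


lemma removed_sub: "x \<in> U \<Longrightarrow> removed E U x \<subseteq> U"
  unfolding removed_def nbhd_def isolated_def Let_def by auto

lemma removed_in: "x \<in> removed E U x"
  unfolding removed_def Let_def by auto

lemma card_mv_less: "finite U \<Longrightarrow> x \<in> U \<Longrightarrow> card (U - removed E U x) < card U"
proof -
  assume a: "finite U" "x \<in> U"
  have "U - removed E U x \<subset> U" using removed_in[of x E U] a(2) by blast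
  then show ?thesis using psubset_card_mono a(1) by blast
qed

lemma bival_fuel_step:
  "finite U \<Longrightarrow> card U \<le> k \<Longrightarrow> bival bl E (Suc k) lft U = bival bl E k lft U"
proof (induction k arbitrary: U lft)
  case 0
  then have "U = {}" by auto
  then show ?case by simp
next
  case (Suc k)
  have eq: "bival bl E (Suc k) lft' (U - removed E U x) = bival bl E k lft' (U - removed E U x)"
    if "x \<in> U" for x lft'
  proof -
    have "card (U - removed E U x) < card U" using card_mv_less[OF Suc.prems(1) that] .
    then show ?thesis by (intro Suc.IH) (use Suc.prems in auto)
  qed
  let ?M = "{x \<in> U. bl x = lft}"
  have A: "(\<lambda>x. int (card (removed E U x)) + bival bl E (Suc k) False (U - removed E U x)) ` ?M
        = (\<lambda>x. int (card (removed E U x)) + bival bl E k False (U - removed E U x)) ` ?M"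
    using eq by (intro image_cong) (auto simp del: bival.simps)
  have B: "(\<lambda>x. bival bl E (Suc k) True (U - removed E U x) - int (card (removed E U x))) ` ?M
        = (\<lambda>x. bival bl E k True (U - removed E U x) - int (card (removed E U x))) ` ?M"
    using eq by (intro image_cong) (auto simp del: bival.simps)
  show ?case unfolding bival.simps(2)[of bl E "Suc k" lft U] bival.simps(2)[of bl E k lft U] Let_def A B by (rule refl)
qed

lemma bival_fuel:
  assumes "finite U" "card U \<le> k"
  shows "bival bl E k lft U = bival bl E (card U) lft U"
  using assms(2)
proof (induction k)
  case 0 then show ?case by simp
next
  case (Suc k)
  show ?case
  proof (cases "card U \<le> k")
    case True
    then show ?thesis using Suc bival_fuel_step[OF assms(1) True] by simp
  next
    case False
    then have "card U = Suc k" using Suc.prems by simp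
    then show ?thesis by simp
  qed
qed

definition val :: "('v \<Rightarrow> bool) \<Rightarrow> ('v \<Rightarrow> 'v \<Rightarrow> bool) \<Rightarrow> bool \<Rightarrow> 'v set \<Rightarrow> int" where
  "val bl E lft U = bival bl E (card U) lft U"

definition mv :: "('v \<Rightarrow> 'v \<Rightarrow> bool) \<Rightarrow> 'v set \<Rightarrow> 'v \<Rightarrow> 'v set" where
  "mv E U x = U - removed E U x"

definition gain :: "('v \<Rightarrow> 'v \<Rightarrow> bool) \<Rightarrow> 'v set \<Rightarrow> 'v \<Rightarrow> int" where
  "gain E U x = int (card U) - int (card (mv E U x))"

lemma gain_card: "finite U \<Longrightarrow> x \<in> U \<Longrightarrow> gain E U x = int (card (removed E U x))"
  unfolding gain_def mv_def
  using removed_sub[of x U E] by (simp add: card_Diff_subset finite_subset of_nat_diff card_mono)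

lemma val_unfold:
  assumes "finite U"
  shows "val bl E lft U =
     (let M = {x \<in> U. bl x = lft} in
      if M = {} then 0
      else if lft then Max ((\<lambda>x. gain E U x + val bl E False (mv E U x)) ` M)
      else Min ((\<lambda>x. val bl E True (mv E U x) - gain E U x) ` M))"
proof (cases "{x \<in> U. bl x = lft} = {}")
  case True
  then show ?thesis unfolding val_def
    by (cases "card U") (simp_all add: Let_def)
next
  case False
  then obtain x0 where "x0 \<in> U" by auto
  then have "card U > 0" using assms card_gt_0_iff by blast
  then obtain k where k: "card U = Suc k" using gr0_conv_Suc by blast
  have f: "bival bl E k lft' (mv E U x) = val bl E lft' (mv E U x)" if "x \<in> U" for x lft'
  proof -
    have "card (mv E U x) \<le> k" using card_mv_less[OF assms that, of E] k unfolding mv_def by simp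
    then show ?thesis unfolding val_def using bival_fuel[of "mv E U x" k] assms unfolding mv_def by simp
  qed
  let ?M = "{x \<in> U. bl x = lft}"
  have A: "(\<lambda>x. int (card (removed E U x)) + bival bl E k False (U - removed E U x)) ` ?M
        = (\<lambda>x. gain E U x + val bl E False (mv E U x)) ` ?M"
    using f gain_card[OF assms] unfolding mv_def by (intro image_cong) auto
  have B: "(\<lambda>x. bival bl E k True (U - removed E U x) - int (card (removed E U x))) ` ?M
        = (\<lambda>x. val bl E True (mv E U x) - gain E U x) ` ?M"
    using f gain_card[OF assms] unfolding mv_def by (intro image_cong) auto
  have "val bl E lft U = bival bl E (Suc k) lft U" by (simp only: val_def k)
  also have "\<dots> = (if ?M = {} then 0
      else if lft then Max ((\<lambda>x. gain E U x + val bl E False (mv E U x)) ` ?M)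
      else Min ((\<lambda>x. val bl E True (mv E U x) - gain E U x) ` ?M))"
    unfolding bival.simps(2)[of bl E k lft U] Let_def A B by (rule refl)
  finally show ?thesis by (simp only: Let_def)
qed

lemma mv_sub: "mv E U x \<subseteq> U" unfolding mv_def by auto
lemma finite_mv: "finite U \<Longrightarrow> finite (mv E U x)" using mv_sub finite_subset by metis
lemma card_mv: "finite U \<Longrightarrow> x \<in> U \<Longrightarrow> card (mv E U x) < card U"
  unfolding mv_def by (rule card_mv_less)

lemma valL_ge: "finite U \<Longrightarrow> x \<in> U \<Longrightarrow> bl x \<Longrightarrow> gain E U x + val bl E False (mv E U x) \<le> val bl E True U"
proof -
  assume a: "finite U" "x \<in> U" "bl x"
  let ?M = "{x \<in> U. bl x = True}"
  have ne: "?M \<noteq> {}" using a by auto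
  have "val bl E True U = Max ((\<lambda>x. gain E U x + val bl E False (mv E U x)) ` ?M)"
    using val_unfold[OF a(1), of bl E True] ne unfolding Let_def by (simp only: if_False if_True)
  moreover have "gain E U x + val bl E False (mv E U x) \<le> Max ((\<lambda>x. gain E U x + val bl E False (mv E U x)) ` ?M)"
    using a by (intro Max_ge) auto
  ultimately show ?thesis by simp
qed

lemma valL_ex: "finite U \<Longrightarrow> x0 \<in> U \<Longrightarrow> bl x0 \<Longrightarrow> \<exists>x\<in>U. bl x \<and> val bl E True U = gain E U x + val bl E False (mv E U x)"
proof -
  assume a: "finite U" "x0 \<in> U" "bl x0"
  let ?M = "{x \<in> U. bl x = True}"
  have ne: "?M \<noteq> {}" using a by auto
  have "val bl E True U = Max ((\<lambda>x. gain E U x + val bl E False (mv E U x)) ` ?M)"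
    using val_unfold[OF a(1), of bl E True] ne unfolding Let_def by (simp only: if_False if_True)
  moreover have "Max ((\<lambda>x. gain E U x + val bl E False (mv E U x)) ` ?M) \<in> (\<lambda>x. gain E U x + val bl E False (mv E U x)) ` ?M"
    using ne a(1) by (intro Max_in) auto
  ultimately show ?thesis by auto
qed

lemma valL_none: "finite U \<Longrightarrow> \<forall>x\<in>U. \<not> bl x \<Longrightarrow> val bl E True U = 0"
proof -
  assume a: "finite U" "\<forall>x\<in>U. \<not> bl x"
  then have "{x \<in> U. bl x = True} = {}" by auto
  then show ?thesis using val_unfold[OF a(1), of bl E True] unfolding Let_def by simp
qed

lemma valR_le: "finite U \<Longrightarrow> x \<in> U \<Longrightarrow> \<not> bl x \<Longrightarrow> val bl E False U \<le> val bl E True (mv E U x) - gain E U x"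
proof -
  assume a: "finite U" "x \<in> U" "\<not> bl x"
  let ?M = "{x \<in> U. bl x = False}"
  have ne: "?M \<noteq> {}" using a by auto
  have "val bl E False U = Min ((\<lambda>x. val bl E True (mv E U x) - gain E U x) ` ?M)"
    using val_unfold[OF a(1), of bl E False] ne unfolding Let_def by (simp only: if_False if_True)
  moreover have "Min ((\<lambda>x. val bl E True (mv E U x) - gain E U x) ` ?M) \<le> val bl E True (mv E U x) - gain E U x"
    using a by (intro Min_le) auto
  ultimately show ?thesis by simp
qed

lemma valR_ex: "finite U \<Longrightarrow> x0 \<in> U \<Longrightarrow> \<not> bl x0 \<Longrightarrow> \<exists>x\<in>U. \<not> bl x \<and> val bl E False U = val bl E True (mv E U x) - gain E U x"
proof -
  assume a: "finite U" "x0 \<in> U" "\<not> bl x0"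
  let ?M = "{x \<in> U. bl x = False}"
  have ne: "?M \<noteq> {}" using a by auto
  have "val bl E False U = Min ((\<lambda>x. val bl E True (mv E U x) - gain E U x) ` ?M)"
    using val_unfold[OF a(1), of bl E False] ne unfolding Let_def by (simp only: if_False if_True)
  moreover have "Min ((\<lambda>x. val bl E True (mv E U x) - gain E U x) ` ?M) \<in> (\<lambda>x. val bl E True (mv E U x) - gain E U x) ` ?M"
    using ne a(1) by (intro Min_in) auto
  ultimately show ?thesis by auto
qed

lemma valR_none: "finite U \<Longrightarrow> \<forall>x\<in>U. bl x \<Longrightarrow> val bl E False U = 0"
proof -
  assume a: "finite U" "\<forall>x\<in>U. bl x"
  then have "{x \<in> U. bl x = False} = {}" by auto
  then show ?thesis using val_unfold[OF a(1), of bl E False] unfolding Let_def by simp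
qed


lemma val_empty: "val bl E lft {} = 0"
  by (simp add: val_def)

lemma val_bound: "finite U \<Longrightarrow> \<bar>val bl E lft U\<bar> \<le> int (card U)"
proof (induction "card U" arbitrary: U lft rule: less_induct)
  case less
  show ?case
  proof (cases lft)
    case True
    show ?thesis
    proof (cases "\<exists>x\<in>U. bl x")
      case False
      then show ?thesis using valL_none[OF less.prems] True by simp
    next
      case T: True
      then obtain x0 where x0: "x0 \<in> U" "bl x0" by auto
      obtain x where x: "x \<in> U" "bl x" "val bl E True U = gain E U x + val bl E False (mv E U x)"
        using valL_ex[of U x0 bl E, OF less.prems x0] by blast
      have c: "card (mv E U x) < card U" using card_mv[OF less.prems x(1)] .
      have "\<bar>val bl E False (mv E U x)\<bar> \<le> int (card (mv E U x))"
        using less.hyps[OF c] finite_mv[OF less.prems] by blast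
      then have "\<bar>val bl E True U\<bar> \<le> int (card U)" using x(3) c unfolding gain_def by linarith
      then show ?thesis using True by simp
    qed
  next
    case False
    show ?thesis
    proof (cases "\<exists>x\<in>U. \<not> bl x")
      case F: False
      then show ?thesis using valR_none[OF less.prems] False by simp
    next
      case T: True
      then obtain x0 where x0: "x0 \<in> U" "\<not> bl x0" by auto
      obtain x where x: "x \<in> U" "\<not> bl x" "val bl E False U = val bl E True (mv E U x) - gain E U x"
        using valR_ex[of U x0 bl E, OF less.prems x0] by blast
      have c: "card (mv E U x) < card U" using card_mv[OF less.prems x(1)] .
      have "\<bar>val bl E True (mv E U x)\<bar> \<le> int (card (mv E U x))"
        using less.hyps[OF c] finite_mv[OF less.prems] by blast
      then have "\<bar>val bl E False U\<bar> \<le> int (card U)" using x(3) c unfolding gain_def by linarith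
      then show ?thesis using False by simp
    qed
  qed
qed

lemma val_swap: "finite U \<Longrightarrow> val (\<lambda>v. \<not> bl v) E lft U = - val bl E (\<not> lft) U"
proof (induction "card U" arbitrary: U lft rule: less_induct)
  case less
  note fin = less.prems
  let ?b = "\<lambda>v. \<not> bl v"
  have IH: "val ?b E l (mv E U x) = - val bl E (\<not> l) (mv E U x)" if "x \<in> U" for x l
    using less.hyps[OF card_mv[OF fin that]] finite_mv[OF fin] by blast
  show ?case
  proof (cases lft)
    case True
    show ?thesis
    proof (cases "\<exists>x\<in>U. \<not> bl x")
      case False
      then show ?thesis using valL_none[OF fin, of ?b] valR_none[OF fin, of bl] True by auto
    next
      case T: True
      then obtain x0 where x0: "x0 \<in> U" "\<not> bl x0" by auto
      obtain x where x: "x \<in> U" "\<not> bl x" "val ?b E True U = gain E U x + val ?b E False (mv E U x)"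
        using valL_ex[OF fin, of x0 ?b] x0 by auto
      obtain z where z: "z \<in> U" "\<not> bl z" "val bl E False U = val bl E True (mv E U z) - gain E U z"
        using valR_ex[of U x0 bl E, OF fin x0] by blast
      have 1: "val bl E False U \<le> val bl E True (mv E U x) - gain E U x"
        using valR_le[of U x bl E, OF fin x(1) x(2)] .
      have 2: "gain E U z + val ?b E False (mv E U z) \<le> val ?b E True U"
        using valL_ge[OF fin z(1), of ?b] z(2) by simp
      show ?thesis using 1 2 x(3) z(3) IH[OF x(1)] IH[OF z(1)] True by simp
    qed
  next
    case False
    show ?thesis
    proof (cases "\<exists>x\<in>U. bl x")
      case F: False
      then show ?thesis using valR_none[OF fin, of ?b] valL_none[OF fin, of bl] False by auto
    next
      case T: True
      then obtain x0 where x0: "x0 \<in> U" "bl x0" by auto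
      obtain x where x: "x \<in> U" "bl x" "val ?b E False U = val ?b E True (mv E U x) - gain E U x"
        using valR_ex[OF fin, of x0 ?b] x0 by auto
      obtain z where z: "z \<in> U" "bl z" "val bl E True U = gain E U z + val bl E False (mv E U z)"
        using valL_ex[of U x0 bl E, OF fin x0] by blast
      have 1: "gain E U x + val bl E False (mv E U x) \<le> val bl E True U"
        using valL_ge[of U x bl E, OF fin x(1) x(2)] .
      have 2: "val ?b E False U \<le> val ?b E True (mv E U z) - gain E U z"
        using valR_le[OF fin z(1), of ?b] z(2) by simp
      show ?thesis using 1 2 x(3) z(3) IH[OF x(1)] IH[OF z(1)] False by simp
    qed
  qed
qed

definition Dl :: "('v \<Rightarrow> 'v \<Rightarrow> bool) \<Rightarrow> 'v set \<Rightarrow> 'v set \<Rightarrow> 'v set" where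
  "Dl E U S = (U - S) - isolated E (U - S)"

definition NN :: "('v \<Rightarrow> 'v \<Rightarrow> bool) \<Rightarrow> 'v \<Rightarrow> 'v set" where
  "NN E x = insert x {z. E x z}"

lemma mv_Dl: "mv E U x = Dl E U (NN E x)"
  unfolding mv_def Dl_def removed_def NN_def nbhd_def Let_def isolated_def by auto


lemma iso_mv:
  assumes inj: "inj_on f U" and E': "\<And>u v. u \<in> U \<Longrightarrow> v \<in> U \<Longrightarrow> E' (f u) (f v) = E u v"
    and x: "x \<in> U"
  shows "f ` mv E U x = mv E' (f ` U) (f x)"
proof -
  have L1: "f ` (U - NN E x) = f ` U - NN E' (f x)"
  proof
    show "f ` (U - NN E x) \<subseteq> f ` U - NN E' (f x)"
    proof
      fix w assume "w \<in> f ` (U - NN E x)"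
      then obtain u where u: "u \<in> U" "u \<notin> NN E x" "w = f u" by auto
      have "f u \<noteq> f x" using inj u x unfolding inj_on_def NN_def by auto
      moreover have "\<not> E' (f x) (f u)" using E'[OF x u(1)] u(2) unfolding NN_def by auto
      ultimately show "w \<in> f ` U - NN E' (f x)" using u unfolding NN_def by auto
    qed
  next
    show "f ` U - NN E' (f x) \<subseteq> f ` (U - NN E x)"
    proof
      fix w assume "w \<in> f ` U - NN E' (f x)"
      then obtain u where u: "u \<in> U" "w = f u" "f u \<notin> NN E' (f x)" by auto
      have "u \<noteq> x" using u unfolding NN_def by auto
      moreover have "\<not> E x u" using E'[OF x u(1)] u(3) unfolding NN_def by auto
      ultimately show "w \<in> f ` (U - NN E x)" using u unfolding NN_def by auto
    qed
  qed
  have L2: "f ` isolated E W = isolated E' (f ` W)" if W: "W \<subseteq> U" for W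
  proof
    show "f ` isolated E W \<subseteq> isolated E' (f ` W)"
      unfolding isolated_def using E' W by auto
    show "isolated E' (f ` W) \<subseteq> f ` isolated E W"
      unfolding isolated_def using E' W by (auto simp: subset_iff) 
  qed
  let ?W = "U - NN E x"
  have "f ` mv E U x = f ` (?W - isolated E ?W)" unfolding mv_Dl Dl_def ..
  also have "\<dots> = f ` ?W - f ` isolated E ?W"
    using inj by (intro inj_on_image_set_diff) (auto simp: isolated_def)
  also have "\<dots> = (f ` U - NN E' (f x)) - isolated E' (f ` U - NN E' (f x))"
    using L1 L2[of ?W] by auto
  also have "\<dots> = mv E' (f ` U) (f x)" unfolding mv_Dl Dl_def ..
  finally show ?thesis .
qed

lemma val_iso:
  assumes "finite U" and "inj_on f U" and "\<And>u v. u \<in> U \<Longrightarrow> v \<in> U \<Longrightarrow> E' (f u) (f v) = E u v"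
    and "\<And>u. u \<in> U \<Longrightarrow> bl' (f u) = bl u"
  shows "val bl' E' lft (f ` U) = val bl E lft U"
  using assms
proof (induction "card U" arbitrary: U lft rule: less_induct)
  case less
  note fin = less.prems(1) and inj = less.prems(2) and E' = less.prems(3) and bl' = less.prems(4)
  have finf: "finite (f ` U)" using fin by simp
  have mvf: "mv E' (f ` U) (f x) = f ` mv E U x" if "x \<in> U" for x
    using iso_mv[of f U E' E x, OF inj E' that] by simp
  have IH: "val bl' E' l (f ` mv E U x) = val bl E l (mv E U x)" if "x \<in> U" for x l
  proof -
    have sub: "mv E U x \<subseteq> U" by (rule mv_sub)
    have a1: "finite (mv E U x)" using finite_subset[OF sub fin] .
    have a2: "inj_on f (mv E U x)" using inj_on_subset[OF inj sub] .
    have a3: "E' (f u) (f v) = E u v" if "u \<in> mv E U x" "v \<in> mv E U x" for u v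
      using E' sub that by blast
    have a4: "bl' (f u) = bl u" if "u \<in> mv E U x" for u
      using bl' sub that by blast
    show ?thesis by (rule less.hyps[OF card_mv[OF fin that] a1 a2 a3 a4])
  qed
  have gainf: "gain E' (f ` U) (f x) = gain E U x" if "x \<in> U" for x
  proof -
    have "card (f ` mv E U x) = card (mv E U x)"
      using inj_on_subset[OF inj mv_sub] card_image by blast
    then show ?thesis unfolding gain_def mvf[OF that] using card_image[OF inj] by simp
  qed
  show ?case
  proof (cases lft)
    case True
    show ?thesis
    proof (cases "\<exists>x\<in>U. bl x")
      case False
      then have nb: "\<forall>x\<in>f ` U. \<not> bl' x" using bl' by auto
      show ?thesis using valL_none[OF finf nb] valL_none[OF fin] False True by auto
    next
      case T: True
      then obtain x0 where x0: "x0 \<in> U" "bl x0" by auto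
      have x0': "f x0 \<in> f ` U" "bl' (f x0)" using x0 bl' by auto
      obtain x' where x': "x' \<in> f ` U" "bl' x'" "val bl' E' True (f ` U) = gain E' (f ` U) x' + val bl' E' False (mv E' (f ` U) x')"
        using valL_ex[of "f ` U" "f x0" bl' E', OF finf x0'] by blast
      obtain x where x: "x \<in> U" "x' = f x" using x'(1) by auto
      obtain z where z: "z \<in> U" "bl z" "val bl E True U = gain E U z + val bl E False (mv E U z)"
        using valL_ex[of U x0 bl E, OF fin x0] by blast
      have 1: "gain E U x + val bl E False (mv E U x) \<le> val bl E True U"
        using valL_ge[of U x bl E, OF fin x(1)] x'(2) x bl' by auto
      have 2: "gain E' (f ` U) (f z) + val bl' E' False (mv E' (f ` U) (f z)) \<le> val bl' E' True (f ` U)"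
        using valL_ge[of "f ` U" "f z" bl' E', OF finf] z bl' by auto
      show ?thesis using 1 2 x'(3) z(3) x(2) mvf[OF x(1)] mvf[OF z(1)] gainf[OF x(1)] gainf[OF z(1)]
          IH[OF x(1)] IH[OF z(1)] True by simp
    qed
  next
    case False
    show ?thesis
    proof (cases "\<exists>x\<in>U. \<not> bl x")
      case F: False
      then have nb: "\<forall>x\<in>f ` U. bl' x" using bl' by auto
      show ?thesis using valR_none[OF finf nb] valR_none[OF fin] F False by auto
    next
      case T: True
      then obtain x0 where x0: "x0 \<in> U" "\<not> bl x0" by auto
      have x0': "f x0 \<in> f ` U" "\<not> bl' (f x0)" using x0 bl' by auto
      obtain x' where x': "x' \<in> f ` U" "\<not> bl' x'" "val bl' E' False (f ` U) = val bl' E' True (mv E' (f ` U) x') - gain E' (f ` U) x'"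
        using valR_ex[of "f ` U" "f x0" bl' E', OF finf x0'] by blast
      obtain x where x: "x \<in> U" "x' = f x" using x'(1) by auto
      obtain z where z: "z \<in> U" "\<not> bl z" "val bl E False U = val bl E True (mv E U z) - gain E U z"
        using valR_ex[of U x0 bl E, OF fin x0] by blast
      have 1: "val bl E False U \<le> val bl E True (mv E U x) - gain E U x"
        using valR_le[of U x bl E, OF fin x(1)] x'(2) x bl' by auto
      have 2: "val bl' E' False (f ` U) \<le> val bl' E' True (mv E' (f ` U) (f z)) - gain E' (f ` U) (f z)"
        using valR_le[of "f ` U" "f z" bl' E', OF finf] z bl' by auto
      show ?thesis using 1 2 x'(3) z(3) x(2) mvf[OF x(1)] mvf[OF z(1)] gainf[OF x(1)] gainf[OF z(1)]
          IH[OF x(1)] IH[OF z(1)] False by simp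
    qed
  qed
qed


locale bip =
  fixes bl :: "'v \<Rightarrow> bool" and E :: "'v \<Rightarrow> 'v \<Rightarrow> bool"
  assumes symE: "E x y \<Longrightarrow> E y x" and bipE: "E x y \<Longrightarrow> bl x \<noteq> bl y"
begin

lemma Dl_sub: "Dl E U S \<subseteq> U - S" unfolding Dl_def by auto

lemma Dl_noiso: "isolated E (Dl E U S) = {}"
  unfolding Dl_def isolated_def using symE by blast

lemma Dl_comp: "Dl E (Dl E U A) B = Dl E U (A \<union> B)"
  unfolding Dl_def isolated_def using symE by blast

lemma Dl_id: "isolated E U = {} \<Longrightarrow> U \<inter> S = {} \<Longrightarrow> Dl E U S = U"
  unfolding Dl_def by (simp add: Diff_triv)

lemma absorb:
  assumes "y \<in> U" "y \<notin> S" "y \<notin> Dl E U S"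
  shows "Dl E (Dl E U S) (NN E y) = Dl E U S"
proof -
  have iso: "y \<in> isolated E (U - S)" using assms unfolding Dl_def by auto
  have "Dl E U S \<inter> NN E y = {}"
    using iso assms(3) Dl_sub[of U S] unfolding isolated_def NN_def by blast
  then show ?thesis using Dl_id[OF Dl_noiso] by blast
qed

lemma both_colours:
  assumes "isolated E U = {}" "v \<in> U"
  shows "\<exists>x\<in>U. bl x" "\<exists>y\<in>U. \<not> bl y"
proof -
  obtain w where "w \<in> U" "E v w" using assms unfolding isolated_def by auto
  then have "bl v \<noteq> bl w" using bipE by blast
  then show "\<exists>x\<in>U. bl x" "\<exists>y\<in>U. \<not> bl y" using \<open>w \<in> U\<close> assms(2) by (cases "bl v"; auto)+
qed

lemma joint:
  assumes "bl x" "\<not> bl y"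
  shows "Dl E U (NN E y) - Dl E U (NN E x \<union> NN E y) \<subseteq> U - Dl E U (NN E x)"
proof
  fix v assume v: "v \<in> Dl E U (NN E y) - Dl E U (NN E x \<union> NN E y)"
  show "v \<in> U - Dl E U (NN E x)"
  proof (rule ccontr)
    assume "v \<notin> U - Dl E U (NN E x)"
    then have vW: "v \<in> Dl E U (NN E x)" using v Dl_sub by blast
    have vV: "v \<in> Dl E U (NN E y)" using v by blast
    have vi: "v \<in> isolated E (U - (NN E x \<union> NN E y))"
      using v vV vW unfolding Dl_def by auto
    obtain w where w: "w \<in> U - NN E x" "E v w" using vW unfolding Dl_def isolated_def by auto
    have "w \<in> NN E y" using vi w unfolding isolated_def by auto
    moreover have "w \<noteq> y" using w vV symE unfolding Dl_def NN_def by auto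
    ultimately have "E y w" unfolding NN_def by auto
    then have "bl w" using bipE assms(2) by blast
    then have nb: "\<not> bl v" using bipE w(2) by blast
    obtain w' where w': "w' \<in> U - NN E y" "E v w'" using vV unfolding Dl_def isolated_def by auto
    have "w' \<in> NN E x" using vi w' unfolding isolated_def by auto
    moreover have "w' \<noteq> x" using w' vW symE unfolding Dl_def NN_def by auto
    ultimately have "E x w'" unfolding NN_def by auto
    then have "\<not> bl w'" using bipE assms(1) by blast
    then have "bl v" using bipE w'(2) by blast
    then show False using nb by simp
  qed
qed

lemma mv_mv: "mv E (mv E U x) y = Dl E U (NN E x \<union> NN E y)"
  unfolding mv_Dl Dl_comp ..

lemma mv_noiso: "isolated E (mv E U x) = {}"
  unfolding mv_Dl by (rule Dl_noiso)

lemma gain_mono: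
  assumes fin: "finite U" and x: "bl x" and y: "\<not> bl y"
  shows "gain E (mv E U y) x \<le> gain E U x"
proof -
  let ?V = "mv E U y" and ?W = "mv E U x" and ?Z = "mv E (mv E U y) x"
  have Z: "?Z = Dl E U (NN E x \<union> NN E y)" unfolding mv_mv by (simp add: Un_commute)
  have ZV: "?Z \<subseteq> ?V" by (rule mv_sub)
  have finV: "finite ?V" using finite_mv[OF fin] .
  have "?V - ?Z \<subseteq> U - ?W" using joint[OF x y, of U] by (simp add: mv_Dl Dl_comp Un_commute)
  then have "card (?V - ?Z) \<le> card (U - ?W)" using fin by (intro card_mono) auto
  moreover have "card (?V - ?Z) = card ?V - card ?Z" using card_Diff_subset[OF finite_subset[OF ZV finV] ZV] .
  moreover have "card (U - ?W) = card U - card ?W" using card_Diff_subset[OF finite_mv[OF fin] mv_sub] .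
  moreover have "card ?Z \<le> card ?V" using card_mono[OF finV ZV] .
  moreover have "card ?W \<le> card U" using card_mono[OF fin mv_sub] .
  ultimately show ?thesis unfolding gain_def by linarith
qed

end


context bip begin

lemma gift_all:
  "finite U \<Longrightarrow> isolated E U = {} \<Longrightarrow>
    (\<forall>y\<in>U. \<not> bl y \<longrightarrow> val bl E True (mv E U y) - gain E U y \<le> val bl E True U
                     \<and> val bl E False (mv E U y) - gain E U y \<le> val bl E False U)
    \<and> val bl E False U \<le> val bl E True U"
proof (induction "card U" arbitrary: U rule: less_induct)
  case less
  note fin = less.prems(1) and noiso = less.prems(2)
  have IH: "(\<forall>y\<in>W. \<not> bl y \<longrightarrow> val bl E True (mv E W y) - gain E W y \<le> val bl E True W
                     \<and> val bl E False (mv E W y) - gain E W y \<le> val bl E False W)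
    \<and> val bl E False W \<le> val bl E True W" if "W = mv E U x" "x \<in> U" for W x
    using less.hyps[of W] that card_mv[OF fin] finite_mv[OF fin] mv_noiso by blast
  have cardmv: "card (mv E U x) \<le> card U" for x using card_mono[OF fin mv_sub] .
  have GL: "val bl E True (mv E U y) - gain E U y \<le> val bl E True U" if y: "y \<in> U" "\<not> bl y" for y
  proof -
    define V where "V = mv E U y"
    have finV: "finite V" unfolding V_def using finite_mv[OF fin] .
    show ?thesis
    proof (cases "\<exists>x\<in>V. bl x")
      case False
      then have "V = {}" using both_colours[of V] mv_noiso unfolding V_def by blast
      then have "val bl E True V - gain E U y = - int (card U)"
        unfolding V_def gain_def by (simp add: val_empty)
      moreover have "- int (card U) \<le> val bl E True U" using val_bound[OF fin, of bl E True] by linarith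
      ultimately show ?thesis unfolding V_def by linarith
    next
      case True
      then obtain x0 where x0: "x0 \<in> V" "bl x0" by blast
      obtain x where x: "x \<in> V" "bl x" "val bl E True V = gain E V x + val bl E False (mv E V x)"
        using valL_ex[of V x0 bl E, OF finV x0] by blast
      have xU: "x \<in> U" using mv_sub[of E U y] x(1) unfolding V_def by (rule subsetD)
      define W where "W = mv E U x"
      have L: "gain E U x + val bl E False W \<le> val bl E True U"
        unfolding W_def using valL_ge[of U x bl E, OF fin xU x(2)] .
      have gm: "gain E V x \<le> gain E U x" unfolding V_def using gain_mono[OF fin x(2) y(2)] .
      have cy: "0 \<le> gain E U y" unfolding gain_def using cardmv[of y] by simp
      have xNy: "x \<notin> NN E y" using x(1) Dl_sub unfolding V_def mv_Dl by blast
      have yNx: "y \<notin> NN E x" using xNy symE unfolding NN_def by auto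
      show ?thesis
      proof (cases "y \<in> W")
        case True
        have finW: "finite W" unfolding W_def using finite_mv[OF fin] .
        have h: "val bl E False (mv E W y) - gain E W y \<le> val bl E False W"
          using IH[OF W_def xU] True y(2) by blast
        have eq: "mv E W y = mv E V x" unfolding W_def V_def mv_mv by (simp add: Un_commute)
        have "val bl E False (mv E V x) - (int (card W) - int (card (mv E V x))) \<le> val bl E False W"
          using h unfolding gain_def eq .
        moreover have "card (mv E V x) \<le> card V" using card_mono[OF finV mv_sub] .
        moreover have "card (mv E W y) \<le> card W" using card_mono[OF finW mv_sub] .
        ultimately show ?thesis using L gm x(3) unfolding gain_def V_def W_def by linarith
      next
        case False
        have "mv E V x = Dl E W (NN E y)" unfolding W_def V_def mv_mv mv_Dl Dl_comp by (simp add: Un_commute)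
        also have "\<dots> = W" unfolding W_def mv_Dl using absorb[OF y(1) yNx] False unfolding W_def mv_Dl by blast
        finally have eqW: "mv E V x = W" .
        have "val bl E True V = gain E V x + val bl E False W" using x(3) unfolding eqW .
        then show ?thesis using L gm cy unfolding V_def by linarith
      qed
    qed
  qed
  have NZV: "val bl E False (mv E U y) \<le> val bl E True (mv E U y)" if "y \<in> U" for y
    using IH[OF refl that] by blast
  have GR: "val bl E False (mv E U y) - gain E U y \<le> val bl E False U" if y: "y \<in> U" "\<not> bl y" for y
  proof -
    define V where "V = mv E U y"
    have finV: "finite V" unfolding V_def using finite_mv[OF fin] .
    obtain z where z: "z \<in> U" "\<not> bl z" "val bl E False U = val bl E True (mv E U z) - gain E U z"
      using valR_ex[of U y bl E, OF fin y] by blast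
    define Uz where "Uz = mv E U z"
    have finUz: "finite Uz" unfolding Uz_def using finite_mv[OF fin] .
    have yV: "y \<notin> V" unfolding V_def mv_Dl using Dl_sub unfolding NN_def by blast
    show ?thesis
    proof (cases "z \<in> V")
      case True
      have zy: "z \<noteq> y" using True yV by blast
      have nE: "\<not> E z y" using bipE y(2) z(2) by blast
      have R1: "val bl E False V \<le> val bl E True (mv E V z) - gain E V z"
        using valR_le[of V z bl E, OF finV True z(2)] .
      have Z1: "mv E V z = Dl E U (NN E y \<union> NN E z)" unfolding V_def mv_mv ..
      show ?thesis
      proof (cases "y \<in> Uz")
        case True
        have h: "val bl E True (mv E Uz y) - gain E Uz y \<le> val bl E True Uz"
          using IH[OF Uz_def z(1)] True y(2) by blast
        have eq: "mv E Uz y = mv E V z" unfolding Uz_def V_def mv_mv by (simp add: Un_commute)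
        have "val bl E True (mv E V z) - (int (card Uz) - int (card (mv E V z))) \<le> val bl E True Uz"
          using h unfolding gain_def eq .
        moreover have "card (mv E V z) \<le> card V" using card_mono[OF finV mv_sub] .
        moreover have "card (mv E Uz y) \<le> card Uz" using card_mono[OF finUz mv_sub] .
        moreover have "card V \<le> card U" unfolding V_def using cardmv .
        moreover have "card Uz \<le> card U" unfolding Uz_def using cardmv .
        ultimately show ?thesis using R1 z(3) unfolding gain_def V_def Uz_def by linarith
      next
        case False
        have yNz: "y \<notin> NN E z" using zy nE symE unfolding NN_def by auto
        have "mv E V z = Dl E Uz (NN E y)" unfolding Uz_def V_def mv_mv mv_Dl Dl_comp by (simp add: Un_commute)
        also have "\<dots> = Uz" using absorb[OF y(1) yNz] False unfolding Uz_def mv_Dl by blast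
        finally have e: "mv E V z = Uz" .
        have "card Uz \<le> card V" using e card_mono[OF finV mv_sub[of E V z]] by simp
        moreover have "card V \<le> card U" unfolding V_def using cardmv .
        moreover have "val bl E False V \<le> val bl E True Uz - (int (card V) - int (card Uz))"
          using R1 unfolding gain_def e .
        ultimately show ?thesis using z(3) unfolding gain_def V_def Uz_def by linarith
      qed
    next
      case False
      show ?thesis
      proof (cases "z = y")
        case True
        then show ?thesis using z(3) NZV[OF y(1)] unfolding V_def by simp
      next
        case zy: False
        have nE: "\<not> E y z" using bipE y(2) z(2) by blast
        have zNy: "z \<notin> NN E y" using zy nE unfolding NN_def by auto
        have VzV: "Dl E V (NN E z) = V" using absorb[OF z(1) zNy] False unfolding V_def mv_Dl by blast
        have eq: "Dl E Uz (NN E y) = V"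
          using VzV unfolding Uz_def V_def mv_Dl Dl_comp by (simp add: Un_commute)
        show ?thesis
        proof (cases "y \<in> Uz")
          case True
          have h: "val bl E True (mv E Uz y) - gain E Uz y \<le> val bl E True Uz"
            using IH[OF Uz_def z(1)] True y(2) by blast
          have eq2: "mv E Uz y = V" using eq unfolding mv_Dl .
          have "val bl E True V - (int (card Uz) - int (card V)) \<le> val bl E True Uz"
            using h unfolding gain_def eq2 .
          moreover have "card V \<le> card Uz" using card_mono[OF finUz mv_sub[of E Uz y]] eq2 by simp
          moreover have "card Uz \<le> card U" unfolding Uz_def using cardmv .
          ultimately show ?thesis using z(3) NZV[OF y(1)] unfolding gain_def V_def Uz_def by linarith
        next
          case False
          have yNz: "y \<notin> NN E z" using zy nE symE unfolding NN_def by auto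
          have "Dl E Uz (NN E y) = Uz" using absorb[OF y(1) yNz] False unfolding Uz_def mv_Dl by blast
          then have "Uz = V" using eq by simp
          then show ?thesis using z(3) NZV[OF y(1)] unfolding gain_def V_def Uz_def by simp
        qed
      qed
    qed
  qed
  have NZ: "val bl E False U \<le> val bl E True U"
  proof (cases "U = {}")
    case True
    then show ?thesis by (simp add: val_empty)
  next
    case False
    then obtain v where "v \<in> U" by blast
    then obtain y0 where y0: "y0 \<in> U" "\<not> bl y0" using both_colours[OF noiso] by blast
    obtain y where y: "y \<in> U" "\<not> bl y" "val bl E False U = val bl E True (mv E U y) - gain E U y"
      using valR_ex[of U y0 bl E, OF fin y0] by blast
    then show ?thesis using GL[OF y(1) y(2)] by simp
  qed
  show ?case using GL GR NZ by blast
qed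

lemma nonzug: "finite U \<Longrightarrow> isolated E U = {} \<Longrightarrow> val bl E False U \<le> val bl E True U"
  using gift_all by blast

end


context bip begin

lemma sum_mv:
  assumes finA: "finite A" and finB: "finite B" and dis: "A \<inter> B = {}"
    and sep: "\<forall>a\<in>A. \<forall>b\<in>B. \<not> E a b" and isoB: "isolated E B = {}" and x: "x \<in> A"
  shows "mv E (A \<union> B) x = mv E A x \<union> B" "gain E (A \<union> B) x = gain E A x"
proof -
  have NB: "NN E x \<inter> B = {}" using x dis sep unfolding NN_def by auto
  have 1: "(A \<union> B) - NN E x = (A - NN E x) \<union> B" using NB by auto
  have 2: "isolated E ((A - NN E x) \<union> B) = isolated E (A - NN E x)"
  proof
    show "isolated E (A - NN E x \<union> B) \<subseteq> isolated E (A - NN E x)"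
      using isoB unfolding isolated_def by auto
    show "isolated E (A - NN E x) \<subseteq> isolated E (A - NN E x \<union> B)"
      using sep unfolding isolated_def by auto
  qed
  have 3: "isolated E (A - NN E x) \<inter> B = {}" using dis unfolding isolated_def by auto
  show eq: "mv E (A \<union> B) x = mv E A x \<union> B"
    unfolding mv_Dl Dl_def 1 2 using 3 by auto
  have c1: "card (A \<union> B) = card A + card B" using card_Un_disjoint[OF finA finB dis] .
  have "mv E A x \<inter> B = {}" using dis mv_sub[of E A x] by auto
  then have c2: "card (mv E A x \<union> B) = card (mv E A x) + card B"
    using card_Un_disjoint[OF finite_mv[OF finA] finB] by simp
  show "gain E (A \<union> B) x = gain E A x" unfolding gain_def eq c1 c2 by simp
qed

lemma milnor:
  "finite A \<Longrightarrow> finite B \<Longrightarrow> isolated E A = {} \<Longrightarrow> isolated E B = {} \<Longrightarrow> A \<inter> B = {}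
   \<Longrightarrow> (\<forall>a\<in>A. \<forall>b\<in>B. \<not> E a b)
   \<Longrightarrow> val bl E True (A \<union> B) \<le> val bl E True A + val bl E True B
     \<and> val bl E False (A \<union> B) \<le> val bl E False A + val bl E True B"
proof (induction "card A + card B" arbitrary: A B rule: less_induct)
  case less
  note finA = less.prems(1) and finB = less.prems(2) and isoA = less.prems(3) and isoB = less.prems(4)
    and dis = less.prems(5) and sep = less.prems(6)
  have sep': "\<forall>b\<in>B. \<forall>a\<in>A. \<not> E b a" using sep symE by blast
  have dis': "B \<inter> A = {}" using dis by blast
  have IHA: "val bl E True (mv E A x \<union> B) \<le> val bl E True (mv E A x) + val bl E True B
     \<and> val bl E False (mv E A x \<union> B) \<le> val bl E False (mv E A x) + val bl E True B" if "x \<in> A" for x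
  proof (rule less.hyps)
    show "card (mv E A x) + card B < card A + card B" using card_mv[OF finA that] by simp
    show "finite (mv E A x)" using finite_mv[OF finA] .
    show "isolated E (mv E A x) = {}" using mv_noiso .
    show "mv E A x \<inter> B = {}" using dis mv_sub[of E A x] by blast
    show "\<forall>a\<in>mv E A x. \<forall>b\<in>B. \<not> E a b" using sep mv_sub[of E A x] by blast
  qed (use finB isoB in auto)
  have IHB: "val bl E True (mv E B x \<union> A) \<le> val bl E True (mv E B x) + val bl E True A
     \<and> val bl E False (mv E B x \<union> A) \<le> val bl E False (mv E B x) + val bl E True A" if "x \<in> B" for x
  proof (rule less.hyps)
    show "card (mv E B x) + card A < card A + card B" using card_mv[OF finB that] by simp
    show "finite (mv E B x)" using finite_mv[OF finB] .
    show "isolated E (mv E B x) = {}" using mv_noiso .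
    show "mv E B x \<inter> A = {}" using dis mv_sub[of E B x] by blast
    show "\<forall>a\<in>mv E B x. \<forall>b\<in>A. \<not> E a b" using sep' mv_sub[of E B x] by blast
  qed (use finA isoA in auto)
  have finU: "finite (A \<union> B)" using finA finB by simp
  have C1: "val bl E True (A \<union> B) \<le> val bl E True A + val bl E True B"
  proof (cases "\<exists>x\<in>A \<union> B. bl x")
    case False
    have "A = {}" using both_colours(1)[OF isoA] False by blast
    moreover have "B = {}" using both_colours(1)[OF isoB] False by blast
    ultimately show ?thesis by (simp add: val_empty)
  next
    case True
    then obtain x0 where x0: "x0 \<in> A \<union> B" "bl x0" by blast
    obtain x where x: "x \<in> A \<union> B" "bl x" "val bl E True (A \<union> B) = gain E (A \<union> B) x + val bl E False (mv E (A \<union> B) x)"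
      using valL_ex[of "A \<union> B" x0 bl E, OF finU x0] by blast
    show ?thesis
    proof (cases "x \<in> A")
      case True
      note s = sum_mv[OF finA finB dis sep isoB True]
      have "val bl E True (A \<union> B) = gain E A x + val bl E False (mv E A x \<union> B)"
        using x(3) unfolding s .
      moreover have "gain E A x + val bl E False (mv E A x) \<le> val bl E True A"
        using valL_ge[of A x bl E, OF finA True x(2)] .
      ultimately show ?thesis using IHA[OF True] by linarith
    next
      case False
      then have xB: "x \<in> B" using x(1) by blast
      note s = sum_mv[OF finB finA dis' sep' isoA xB]
      have "val bl E True (A \<union> B) = gain E B x + val bl E False (mv E B x \<union> A)"
        using x(3) unfolding Un_commute[of A B] s .
      moreover have "gain E B x + val bl E False (mv E B x) \<le> val bl E True B"
        using valL_ge[of B x bl E, OF finB xB x(2)] .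
      ultimately show ?thesis using IHB[OF xB] by linarith
    qed
  qed
  have C2: "val bl E False (A \<union> B) \<le> val bl E False A + val bl E True B"
  proof (cases "A = {}")
    case True
    then show ?thesis using nonzug[OF finB isoB] by (simp add: val_empty)
  next
    case False
    then obtain v where "v \<in> A" by blast
    then obtain z0 where z0: "z0 \<in> A" "\<not> bl z0" using both_colours(2)[OF isoA] by blast
    obtain z where z: "z \<in> A" "\<not> bl z" "val bl E False A = val bl E True (mv E A z) - gain E A z"
      using valR_ex[of A z0 bl E, OF finA z0] by blast
    note s = sum_mv[OF finA finB dis sep isoB z(1)]
    have zU: "z \<in> A \<union> B" using z(1) by blast
    have "val bl E False (A \<union> B) \<le> val bl E True (mv E A z \<union> B) - gain E A z"
      using valR_le[of "A \<union> B" z bl E, OF finU zU z(2)] unfolding s .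
    then show ?thesis using IHA[OF z(1)] z(3) by linarith
  qed
  show ?case using C1 C2 by blast
qed

end


definition Ei :: "nat \<times> int \<Rightarrow> nat \<times> int \<Rightarrow> bool" where
  "Ei u v = (fst u = fst v \<and> (snd u = snd v + 1 \<or> snd v = snd u + 1))"

definition coli :: "bool \<Rightarrow> nat \<times> int \<Rightarrow> bool" where
  "coli s v = (odd (snd v) = s)"

lemma bip_coli: "bip (coli s) Ei"
  by unfold_locales (auto simp: Ei_def coli_def)

lemma NN_Ei: "NN Ei (c, i) = {(c, i), (c, i - 1), (c, i + 1)}"
  unfolding NN_def Ei_def by auto

lemma Ei_iff: "Ei (c', j) w \<longleftrightarrow> w = (c', j - 1) \<or> w = (c', j + 1)"
  unfolding Ei_def by (cases w) auto

lemma mv_mem: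
  "(c', j) \<in> mv Ei U (c, i) \<longleftrightarrow> (c', j) \<in> U \<and> \<not> (c' = c \<and> \<bar>j - i\<bar> \<le> 1)
     \<and> (((c', j - 1) \<in> U \<and> \<not> (c' = c \<and> \<bar>j - 1 - i\<bar> \<le> 1))
        \<or> ((c', j + 1) \<in> U \<and> \<not> (c' = c \<and> \<bar>j + 1 - i\<bar> \<le> 1)))"
proof -
  have nn: "w \<in> NN Ei (c, i) \<longleftrightarrow> fst w = c \<and> \<bar>snd w - i\<bar> \<le> 1" for w
    unfolding NN_Ei by (cases w) auto
  let ?N = "NN Ei (c, i)"
  have 1: "(c', j) \<in> mv Ei U (c, i) \<longleftrightarrow> (c', j) \<in> U - ?N \<and> (\<exists>w\<in>U - ?N. Ei (c', j) w)"
    unfolding mv_Dl Dl_def isolated_def by blast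
  have 2: "(\<exists>w\<in>U - ?N. Ei (c', j) w) \<longleftrightarrow> (c', j - 1) \<in> U - ?N \<or> (c', j + 1) \<in> U - ?N"
    unfolding Ei_iff by blast
  show ?thesis unfolding 1 2 Diff_iff nn fst_conv snd_conv by blast
qed

lemma noiso_Ei: "isolated Ei U = {} \<Longrightarrow> (c', j) \<in> U \<Longrightarrow> (c', j - 1) \<in> U \<or> (c', j + 1) \<in> U"
proof -
  assume iso: "isolated Ei U = {}" and mem: "(c', j) \<in> U"
  have "(c', j) \<notin> isolated Ei U" using iso by simp
  then obtain w where "w \<in> U" "Ei (c', j) w" using mem unfolding isolated_def by auto
  then show ?thesis unfolding Ei_iff by auto
qed

lemma far:
  assumes "isolated Ei U = {}" "c' \<noteq> c \<or> 3 \<le> \<bar>j - i\<bar>"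
  shows "(c', j) \<in> mv Ei U (c, i) \<longleftrightarrow> (c', j) \<in> U"
  using assms noiso_Ei[OF assms(1), of c' j] unfolding mv_mem by auto

definition EBs :: "bool \<Rightarrow> (nat \<times> int) set \<Rightarrow> (nat \<times> int) set" where
  "EBs s U = {v \<in> U. coli s v \<and> (fst v, snd v + 1) \<notin> U}"

lemma card_win:
  assumes "finite J"
  shows "int (card (A \<inter> (\<lambda>j. (c, i + j)) ` J)) = (\<Sum>j\<in>J. of_bool ((c, (i::int) + j) \<in> A))"
proof -
  have "A \<inter> (\<lambda>j. (c, i + j)) ` J = (\<lambda>j. (c, i + j)) ` (J \<inter> {j. (c, i + j) \<in> A})" by auto
  moreover have "inj_on (\<lambda>j. (c, i + j)) (J \<inter> {j. (c, i + j) \<in> A})" by (auto simp: inj_on_def)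
  ultimately have e1: "card (A \<inter> (\<lambda>j. (c, i + j)) ` J) = card (J \<inter> {j. (c, i + j) \<in> A})"
    using card_image by metis
  have e2: "(\<Sum>j\<in>J. of_bool ((c, i + j) \<in> A)) = int (card (J \<inter> {j. (c, i + j) \<in> A}))"
    using assms by simp
  show ?thesis unfolding e1 e2 by (rule refl)
qed

abbreviation "Win3 \<equiv> {-3, -2, -1, 0, 1, 2::int}"
abbreviation "Win2 \<equiv> {-2, -1, 0, 1, 2::int}"

lemma eB_diff:
  assumes fin: "finite U" and iso: "isolated Ei U = {}"
  shows "int (card (EBs s (mv Ei U (c, i)))) - int (card (EBs s U))
    = (\<Sum>j\<in>Win3. of_bool ((c, i + j) \<in> EBs s (mv Ei U (c, i)))) - (\<Sum>j\<in>Win3. of_bool ((c, i + j) \<in> EBs s U))"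
proof -
  let ?W = "mv Ei U (c, i)"
  let ?Win = "(\<lambda>j. (c, i + j)) ` Win3"
  have finW: "finite ?W" using finite_mv[OF fin] .
  have feq: "EBs s ?W - ?Win = EBs s U - ?Win"
  proof
    have key: "(c', j) \<in> ?W \<longleftrightarrow> (c', j) \<in> U" "(c', j + 1) \<in> ?W \<longleftrightarrow> (c', j + 1) \<in> U"
      if "(c', j) \<notin> ?Win" for c' j
    proof -
      have "c' \<noteq> c \<or> j - i \<notin> Win3" using that by force
      then have "c' \<noteq> c \<or> (3 \<le> \<bar>j - i\<bar> \<and> 3 \<le> \<bar>j + 1 - i\<bar>)" by auto
      then show "(c', j) \<in> ?W \<longleftrightarrow> (c', j) \<in> U" "(c', j + 1) \<in> ?W \<longleftrightarrow> (c', j + 1) \<in> U"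
        using far[OF iso] by auto
    qed
    show "EBs s ?W - ?Win \<subseteq> EBs s U - ?Win"
    proof
      fix v assume v: "v \<in> EBs s ?W - ?Win"
      obtain c' j where vv: "v = (c', j)" by (cases v)
      show "v \<in> EBs s U - ?Win" using v key[of c' j] unfolding vv EBs_def by auto
    qed
    show "EBs s U - ?Win \<subseteq> EBs s ?W - ?Win"
    proof
      fix v assume v: "v \<in> EBs s U - ?Win"
      obtain c' j where vv: "v = (c', j)" by (cases v)
      show "v \<in> EBs s ?W - ?Win" using v key[of c' j] unfolding vv EBs_def by auto
    qed
  qed
  have f1: "finite (EBs s ?W)" using finW unfolding EBs_def by simp
  have f2: "finite (EBs s U)" using fin unfolding EBs_def by simp
  have "card (EBs s ?W) = card (EBs s ?W \<inter> ?Win) + card (EBs s ?W - ?Win)" using card_Int_Diff[OF f1] .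
  moreover have "card (EBs s U) = card (EBs s U \<inter> ?Win) + card (EBs s U - ?Win)" using card_Int_Diff[OF f2] .
  ultimately have "int (card (EBs s ?W)) - int (card (EBs s U)) = int (card (EBs s ?W \<inter> ?Win)) - int (card (EBs s U \<inter> ?Win))"
    using feq by simp
  then show ?thesis using card_win[of Win3 "EBs s ?W" c i] card_win[of Win3 "EBs s U" c i] by simp
qed

lemma gain_win:
  assumes fin: "finite U" and iso: "isolated Ei U = {}"
  shows "gain Ei U (c, i) = (\<Sum>j\<in>Win2. of_bool ((c, i + j) \<in> U - mv Ei U (c, i)))"
proof -
  let ?W = "mv Ei U (c, i)"
  let ?Win = "(\<lambda>j. (c, i + j)) ` Win2"
  have sub: "U - ?W \<subseteq> ?Win"
  proof
    fix v assume v: "v \<in> U - ?W"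
    obtain c' j where vv: "v = (c', j)" by (cases v)
    have "\<not> (c' \<noteq> c \<or> 3 \<le> \<bar>j - i\<bar>)" using far[OF iso, of c' c j i] v unfolding vv by blast
    then have "c' = c" "j - i \<in> Win2" by auto
    then show "v \<in> ?Win" unfolding vv by (auto intro: image_eqI[where x = "j - i"])
  qed
  have "gain Ei U (c, i) = int (card (U - ?W))"
    unfolding gain_def using card_Diff_subset[OF finite_mv[OF fin] mv_sub] card_mono[OF fin mv_sub[of Ei U "(c,i)"]]
    by simp
  also have "U - ?W = (U - ?W) \<inter> ?Win" using sub by blast
  finally show ?thesis using card_win[of Win2 "U - ?W" c i] by simp
qed


definition inU :: "(nat \<times> int) set \<Rightarrow> nat \<Rightarrow> int \<Rightarrow> int \<Rightarrow> bool" where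
  "inU U c i j = ((c, i + j) \<in> U)"

definition inM :: "(nat \<times> int) set \<Rightarrow> nat \<Rightarrow> int \<Rightarrow> int \<Rightarrow> int \<Rightarrow> bool" where
  "inM U c i k j = ((c, i + j) \<in> mv Ei U (c, i + k))"

lemma inM_eq: "inM U c i k j \<longleftrightarrow> inU U c i j \<and> \<not> \<bar>j - k\<bar> \<le> 1
   \<and> ((inU U c i (j - 1) \<and> \<not> \<bar>j - 1 - k\<bar> \<le> 1) \<or> (inU U c i (j + 1) \<and> \<not> \<bar>j + 1 - k\<bar> \<le> 1))"
  unfolding inM_def inU_def mv_mem by (simp add: algebra_simps)

lemma inEB_U: "(c, i + j) \<in> EBs s U \<longleftrightarrow> inU U c i j \<and> (odd (i + j) = s) \<and> \<not> inU U c i (j + 1)"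
  unfolding EBs_def inU_def coli_def by (simp add: add.assoc)

lemma inEB_M: "(c, i + j) \<in> EBs s (mv Ei U (c, i + k)) \<longleftrightarrow> inM U c i k j \<and> (odd (i + j) = s) \<and> \<not> inM U c i k (j + 1)"
  unfolding EBs_def inM_def coli_def by (simp add: add.assoc)

lemma par: "odd (i + j) = s \<longleftrightarrow> (even j = (odd i = s))" for i j :: int
  by auto

lemma gain_win':
  assumes "finite U" "isolated Ei U = {}"
  shows "gain Ei U (c, i) = (\<Sum>j\<in>Win2. of_bool (inU U c i j \<and> \<not> inM U c i 0 j))"
  using gain_win[OF assms, of c i] unfolding inU_def inM_def by simp

lemma eB_diff':
  assumes "finite U" "isolated Ei U = {}"
  shows "int (card (EBs s (mv Ei U (c, i)))) - int (card (EBs s U))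
    = (\<Sum>j\<in>Win3. of_bool (inM U c i 0 j \<and> (odd (i + j) = s) \<and> \<not> inM U c i 0 (j + 1)))
      - (\<Sum>j\<in>Win3. of_bool (inU U c i j \<and> (odd (i + j) = s) \<and> \<not> inU U c i (j + 1)))"
  using eB_diff[OF assms, of s c i] inEB_U[of c i _ s U] inEB_M[of c i _ s U 0] by simp

lemma noiso_off: "isolated Ei U = {} \<Longrightarrow> inU U c i j \<Longrightarrow> inU U c i (j - 1) \<or> inU U c i (j + 1)"
  unfolding inU_def using noiso_Ei[of U c "i + j"] by (simp add: algebra_simps)

definition Fv :: "(nat \<times> int) set \<Rightarrow> nat \<times> int \<Rightarrow> int" where
  "Fv U v = of_bool ((fst v, snd v - 1) \<in> U) + of_bool ((fst v, snd v - 1) \<in> U \<and> (fst v, snd v - 2) \<in> U)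
     + 2 * of_bool ((fst v, snd v + 1) \<in> U)"

lemma Fv_off: "Fv U (c, i) = of_bool (inU U c i (-1)) + of_bool (inU U c i (-1) \<and> inU U c i (-2)) + 2 * of_bool (inU U c i 1)"
  unfolding Fv_def inU_def by simp

lemma G1:
  assumes fin: "finite U" and iso: "isolated Ei U = {}" and x: "(c, i) \<in> U" "coli s (c, i)"
  shows "gain Ei U (c, i) + (int (card (EBs s (mv Ei U (c, i)))) - int (card (EBs s U))) \<le> Fv U (c, i)"
proof -
  have p: "odd i = s" using x(2) unfolding coli_def by simp
  have n0: "inU U c i 0" using x(1) unfolding inU_def by simp
  note n = noiso_off[OF iso, of c i]
  show ?thesis
    unfolding gain_win'[OF fin iso] eB_diff'[OF fin iso] Fv_off
    using n0 n[of 0] n[of 2] n[of "-2"] n[of 3] n[of "-3"]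
    apply (simp del: sum_of_bool_eq add: inM_eq par p)
    done
qed

definition Pv :: "(nat \<times> int) set \<Rightarrow> nat \<times> int \<Rightarrow> int" where
  "Pv U v = 1 + of_bool ((fst v, snd v - 1) \<in> U) + of_bool ((fst v, snd v + 1) \<in> U)
     + of_bool ((fst v, snd v + 2) \<in> U \<and> (fst v, snd v + 3) \<notin> U)
     + of_bool ((fst v, snd v + 1) \<in> U \<and> (fst v, snd v + 2) \<notin> U)"

lemma Pv_off: "Pv U (c, i) = 1 + of_bool (inU U c i (-1)) + of_bool (inU U c i 1)
   + of_bool (inU U c i 2 \<and> \<not> inU U c i 3) + of_bool (inU U c i 1 \<and> \<not> inU U c i 2)"
  unfolding Pv_def inU_def by simp

lemma G2:
  assumes fin: "finite U" and iso: "isolated Ei U = {}" and y: "(c, i) \<in> U" "\<not> coli s (c, i)"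
  shows "Pv U (c, i) \<le> gain Ei U (c, i) - (int (card (EBs s (mv Ei U (c, i)))) - int (card (EBs s U)))"
proof -
  have p: "even i = s" using y(2) unfolding coli_def by simp
  have n0: "inU U c i 0" using y(1) unfolding inU_def by simp
  note n = noiso_off[OF iso, of c i]
  show ?thesis
    unfolding gain_win'[OF fin iso] eB_diff'[OF fin iso] Pv_off
    using n0 n[of 0] n[of 2] n[of "-2"] n[of 3] n[of "-3"]
    by (simp del: sum_of_bool_eq add: inM_eq par p)
qed


lemma Pv_shift: "Pv U (c, i + k) = 1 + of_bool (inU U c i (k - 1)) + of_bool (inU U c i (k + 1))
   + of_bool (inU U c i (k + 2) \<and> \<not> inU U c i (k + 3)) + of_bool (inU U c i (k + 1) \<and> \<not> inU U c i (k + 2))"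
  unfolding Pv_def inU_def by (simp add: algebra_simps)

lemma coli_shift: "coli s (c, i + k) \<longleftrightarrow> (even k = (odd i = s))"
  unfolding coli_def by auto

lemma G3:
  assumes fin: "finite U" and iso: "isolated Ei U = {}" and x: "(c, i) \<in> U" "coli s (c, i)"
  shows "\<exists>y\<in>U. \<not> coli s y \<and> Fv U (c, i) \<le> Pv U y"
proof -
  have p: "odd i = s" using x(2) unfolding coli_def by simp
  let ?D = "{d::nat. \<forall>t\<le>d. inU U c i (int t)}"
  have "?D \<subseteq> (\<lambda>d. (c, i + int d)) -` U" unfolding inU_def by auto
  moreover have "finite ((\<lambda>d. (c, i + int d)) -` U)"
    using fin by (rule finite_vimageI) (auto simp: inj_def)
  ultimately have finD: "finite ?D" by (rule finite_subset)
  have D0: "0 \<in> ?D" using x(1) unfolding inU_def by simp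
  define d where "d = Max ?D"
  have ne: "?D \<noteq> {}" using D0 by blast
  have dD: "d \<in> ?D" unfolding d_def using Max_in[OF finD ne] .
  have all: "inU U c i (int t)" if "t \<le> d" for t using dD that by blast
  have notd: "\<not> inU U c i (int d + 1)"
  proof
    assume a: "inU U c i (int d + 1)"
    have "Suc d \<in> ?D"
    proof (clarify)
      fix t assume "t \<le> Suc d"
      then show "inU U c i (int t)" using all a by (cases "t = Suc d") (auto simp: add.commute)
    qed
    then have "Suc d \<le> d" unfolding d_def using finD by (intro Max_ge) auto
    then show False by simp
  qed
  have notd': "\<not> inU U c i (1 + int d)" using notd by (simp add: add.commute)
  note n = noiso_off[OF iso, of c i]
  have Fle: "Fv U (c, i) \<le> 4" unfolding Fv_off by simp
  have wh: "\<not> coli s (c, i + k)" if "odd k" for k using that p unfolding coli_shift by simp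
  have inU_U: "(c, i + k) \<in> U" if "inU U c i k" for k using that unfolding inU_def .
  show ?thesis
  proof (cases "even d")
    case True
    show ?thesis
    proof (cases "d = 0")
      case True
      have i0: "inU U c i 0" using all[of 0] by simp
      have n1: "\<not> inU U c i 1" using notd True by simp
      have m1: "inU U c i (-1)" using n[of 0] i0 n1 by simp
      have "Fv U (c, i) \<le> Pv U (c, i + (-1))"
        unfolding Fv_off Pv_shift using i0 n1 m1 by simp
      then show ?thesis using inU_U[OF m1] wh[of "-1"] by fastforce
    next
      case False
      then have d2: "d \<ge> 2" using \<open>even d\<close> by presburger
      have a1: "inU U c i (int d - 2)" using all[of "d - 2"] d2 by (simp add: of_nat_diff)
      have a2: "inU U c i (int d - 1)" using all[of "d - 1"] d2 by (simp add: of_nat_diff)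
      have a3: "inU U c i (int d)" using all[of d] by simp
      have "Pv U (c, i + (int d - 1)) \<ge> 4"
        unfolding Pv_shift using a1 a3 notd notd' by simp
      moreover have "odd (int d - 1)" using \<open>even d\<close> by simp
      ultimately show ?thesis using inU_U[OF a2] wh[of "int d - 1"] Fle by fastforce
    qed
  next
    case False
    show ?thesis
    proof (cases "d = 1")
      case True
      have i0: "inU U c i 0" using all[of 0] by simp
      have i1: "inU U c i 1" using all[of 1] True by simp
      have n2: "\<not> inU U c i 2" using notd True by simp
      show ?thesis
      proof (cases "inU U c i (-1)")
        case True
        have "Fv U (c, i) \<le> Pv U (c, i + (-1))"
          unfolding Fv_off Pv_shift using i0 i1 n2 True by simp
        then show ?thesis using inU_U[OF True] wh[of "-1"] by fastforce
      next
        case False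
        have "Fv U (c, i) \<le> Pv U (c, i + 1)"
          unfolding Fv_off Pv_shift using i0 i1 n2 False by simp
        then show ?thesis using inU_U[OF i1] wh[of "1"] by fastforce
      qed
    next
      case d1: False
      then have d3: "d \<ge> 3" using False by presburger
      have a0: "inU U c i (int d - 3)" using all[of "d - 3"] d3 by (simp add: of_nat_diff)
      have a1: "inU U c i (int d - 2)" using all[of "d - 2"] d3 by (simp add: of_nat_diff)
      have a2: "inU U c i (int d - 1)" using all[of "d - 1"] d3 by (simp add: of_nat_diff)
      have a3: "inU U c i (int d)" using all[of d] by simp
      have "Pv U (c, i + (int d - 2)) \<ge> 4"
        unfolding Pv_shift using a0 a2 a3 notd notd' by simp
      moreover have "odd (int d - 2)" using False by simp
      ultimately show ?thesis using inU_U[OF a1] wh[of "int d - 2"] Fle by fastforce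
    qed
  qed
qed


lemma Fv_mono: "W \<subseteq> U \<Longrightarrow> Fv W x \<le> Fv U x"
  unfolding Fv_def by (auto simp: of_bool_def split: if_splits)

lemma Fv_nonneg: "0 \<le> Fv U x"
  unfolding Fv_def by simp

lemma pot:
  "finite U \<Longrightarrow> isolated Ei U = {} \<Longrightarrow>
    val (coli s) Ei False U \<le> int (card (EBs s U))
    \<and> (\<forall>k. 0 \<le> k \<longrightarrow> (\<forall>x\<in>U. coli s x \<longrightarrow> Fv U x \<le> k) \<longrightarrow> val (coli s) Ei True U \<le> int (card (EBs s U)) + k)"
proof (induction "card U" arbitrary: U rule: less_induct)
  case less
  note fin = less.prems(1) and iso = less.prems(2)
  interpret bip "coli s" Ei by (rule bip_coli)
  have IH: "val (coli s) Ei False (mv Ei U x) \<le> int (card (EBs s (mv Ei U x)))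
    \<and> (\<forall>k. 0 \<le> k \<longrightarrow> (\<forall>x'\<in>mv Ei U x. coli s x' \<longrightarrow> Fv (mv Ei U x) x' \<le> k) \<longrightarrow>
        val (coli s) Ei True (mv Ei U x) \<le> int (card (EBs s (mv Ei U x))) + k)" if "x \<in> U" for x
    using less.hyps[OF card_mv[OF fin that]] finite_mv[OF fin] mv_noiso by blast
  have R: "val (coli s) Ei False U \<le> int (card (EBs s U))"
  proof (cases "U = {}")
    case True
    then show ?thesis by (simp add: val_empty)
  next
    case False
    then obtain v where v: "v \<in> U" by blast
    let ?B = "{x \<in> U. coli s x}"
    have Bne: "?B \<noteq> {}" using both_colours(1)[OF iso v] by blast
    have finB: "finite ?B" using fin by simp
    obtain xs where xs: "xs \<in> ?B" "Fv U xs = Max (Fv U ` ?B)"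
      using Max_in[of "Fv U ` ?B"] finB Bne by (metis (no_types, lifting) empty_is_image finite_imageI imageE)
    have xmax: "Fv U x \<le> Fv U xs" if "x \<in> ?B" for x
      using xs(2) finB that by simp
    obtain c i where ci: "xs = (c, i)" by (cases xs)
    obtain y where y: "y \<in> U" "\<not> coli s y" "Fv U xs \<le> Pv U y"
      using G3[OF fin iso, of c i s] xs(1) unfolding ci by blast
    obtain c' i' where ci': "y = (c', i')" by (cases y)
    have g2: "Pv U y \<le> gain Ei U y - (int (card (EBs s (mv Ei U y))) - int (card (EBs s U)))"
      using G2[OF fin iso, of c' i' s] y unfolding ci' by blast
    have r: "val (coli s) Ei False U \<le> val (coli s) Ei True (mv Ei U y) - gain Ei U y"
      using valR_le[of U y "coli s" Ei, OF fin y(1) y(2)] .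
    have k0: "0 \<le> Fv U xs" by (rule Fv_nonneg)
    have kb: "\<forall>x'\<in>mv Ei U y. coli s x' \<longrightarrow> Fv (mv Ei U y) x' \<le> Fv U xs"
    proof (intro ballI impI)
      fix x' assume "x' \<in> mv Ei U y" "coli s x'"
      then have "x' \<in> ?B" using mv_sub[of Ei U y] by blast
      then have "Fv U x' \<le> Fv U xs" by (rule xmax)
      then show "Fv (mv Ei U y) x' \<le> Fv U xs" using Fv_mono[OF mv_sub, of Ei U y x'] by linarith
    qed
    have "val (coli s) Ei True (mv Ei U y) \<le> int (card (EBs s (mv Ei U y))) + Fv U xs"
      using IH[OF y(1)] k0 kb by blast
    then show ?thesis using r g2 y(3) by linarith
  qed
  have L: "val (coli s) Ei True U \<le> int (card (EBs s U)) + k"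
    if k: "0 \<le> k" "\<forall>x\<in>U. coli s x \<longrightarrow> Fv U x \<le> k" for k
  proof (cases "\<exists>x\<in>U. coli s x")
    case False
    then show ?thesis using valL_none[OF fin, of "coli s" Ei] k(1) by simp
  next
    case True
    then obtain x0 where x0: "x0 \<in> U" "coli s x0" by blast
    obtain x where x: "x \<in> U" "coli s x" "val (coli s) Ei True U = gain Ei U x + val (coli s) Ei False (mv Ei U x)"
      using valL_ex[of U x0 "coli s" Ei, OF fin x0] by blast
    obtain c i where ci: "x = (c, i)" by (cases x)
    have g1: "gain Ei U x + (int (card (EBs s (mv Ei U x))) - int (card (EBs s U))) \<le> Fv U x"
      using G1[OF fin iso, of c i s] x unfolding ci by blast
    have "val (coli s) Ei False (mv Ei U x) \<le> int (card (EBs s (mv Ei U x)))" using IH[OF x(1)] by blast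
    then show ?thesis using x(3) g1 k(2) x(1) x(2) by fastforce
  qed
  show ?case using R L by blast
qed


definition Aset :: "nat \<Rightarrow> nat \<Rightarrow> (nat \<times> int) set" where
  "Aset m p = {0..<p} \<times> {1..int m}"

definition Bset :: "nat \<Rightarrow> nat \<Rightarrow> (nat \<times> int) set" where
  "Bset m p = {0..<p} \<times> {- int m..-1}"

lemma fin_Aset: "finite (Aset m p)" unfolding Aset_def by simp
lemma fin_Bset: "finite (Bset m p)" unfolding Bset_def by simp

lemma noiso_prod: "2 \<le> m \<Longrightarrow> isolated Ei (C \<times> {a..a + int m - 1}) = {}"
proof (rule equals0I)
  assume m: "2 \<le> m"
  fix v assume v: "v \<in> isolated Ei (C \<times> {a..a + int m - 1})"
  obtain c i where ci: "v = (c, i)" by (cases v)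
  have vin: "c \<in> C" "a \<le> i" "i \<le> a + int m - 1" using v unfolding ci isolated_def by auto
  have h: "\<forall>w \<in> C \<times> {a..a + int m - 1}. \<not> Ei (c, i) w" using v unfolding ci isolated_def by auto
  show False
  proof (cases "i + 1 \<le> a + int m - 1")
    case True
    have "(c, i + 1) \<in> C \<times> {a..a + int m - 1}" using True vin by auto
    moreover have "Ei (c, i) (c, i + 1)" by (simp add: Ei_def)
    ultimately show False using h by blast
  next
    case False
    have "(c, i - 1) \<in> C \<times> {a..a + int m - 1}" using False vin m by auto
    moreover have "Ei (c, i) (c, i - 1)" by (simp add: Ei_def)
    ultimately show False using h by blast
  qed
qed

lemma noiso_A: "2 \<le> m \<Longrightarrow> isolated Ei (C \<times> {1..int m}) = {}"
  using noiso_prod[of m C 1] by simp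

lemma noiso_B: "2 \<le> m \<Longrightarrow> isolated Ei (C \<times> {- int m..-1}) = {}"
  using noiso_prod[of m C "- int m"] by simp

lemma EBs_A: "1 \<le> m \<Longrightarrow> int (card (EBs s (Aset m p))) = int p * of_bool (odd (int m) = s)"
proof -
  assume m: "1 \<le> m"
  have "EBs s (Aset m p) = {0..<p} \<times> ({int m} \<inter> {i. odd i = s})"
    unfolding EBs_def Aset_def coli_def using m by auto
  then show ?thesis by (cases "odd (int m) = s") (auto simp: card_cartesian_product)
qed

lemma EBs_B: "1 \<le> m \<Longrightarrow> int (card (EBs s (Bset m p))) = int p * of_bool s"
proof -
  assume m: "1 \<le> m"
  have "EBs s (Bset m p) = {0..<p} \<times> ({-1} \<inter> {i. odd i = s})"
    unfolding EBs_def Bset_def coli_def using m by auto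
  then show ?thesis by (cases s) (auto simp: card_cartesian_product)
qed

lemma val_AB: "val (coli s) Ei lft (Bset m p) = val (coli s) Ei lft (Aset m p)"
proof -
  let ?h = "\<lambda>v::nat \<times> int. (fst v, - snd v)"
  have "?h ` Aset m p = Bset m p"
  proof
    show "?h ` Aset m p \<subseteq> Bset m p" unfolding Aset_def Bset_def by auto
    show "Bset m p \<subseteq> ?h ` Aset m p"
    proof
      fix v assume v: "v \<in> Bset m p"
      show "v \<in> ?h ` Aset m p"
        by (rule image_eqI[where x = "(fst v, - snd v)"]) (use v in \<open>auto simp: Aset_def Bset_def\<close>)
    qed
  qed
  moreover have "val (coli s) Ei lft (?h ` Aset m p) = val (coli s) Ei lft (Aset m p)"
    by (rule val_iso) (auto simp: fin_Aset inj_on_def Ei_def coli_def)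
  ultimately show ?thesis by simp
qed

lemma val_shift: "val (coli s) Ei lft ((\<lambda>v. (fst v + k, snd v)) ` U) = val (coli s) Ei lft U" if "finite U"
  by (rule val_iso) (auto simp: that inj_on_def Ei_def coli_def)

lemma subadd:
  assumes m: "2 \<le> m"
  shows "val (coli s) Ei True (Aset m (p + q)) \<le> val (coli s) Ei True (Aset m p) + val (coli s) Ei True (Aset m q)"
proof -
  interpret bip "coli s" Ei by (rule bip_coli)
  let ?T = "\<lambda>v::nat \<times> int. (fst v + p, snd v)"
  have TA: "?T ` Aset m q = {p..<p + q} \<times> {1..int m}"
  proof
    show "?T ` Aset m q \<subseteq> {p..<p + q} \<times> {1..int m}" unfolding Aset_def by auto
    show "{p..<p + q} \<times> {1..int m} \<subseteq> ?T ` Aset m q"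
    proof
      fix v assume v: "v \<in> {p..<p + q} \<times> {1..int m}"
      show "v \<in> ?T ` Aset m q"
        by (rule image_eqI[where x = "(fst v - p, snd v)"]) (use v in \<open>auto simp: Aset_def\<close>)
    qed
  qed
  have U: "Aset m (p + q) = Aset m p \<union> ?T ` Aset m q"
    unfolding TA unfolding Aset_def by auto
  have "val (coli s) Ei True (Aset m p \<union> ?T ` Aset m q) \<le> val (coli s) Ei True (Aset m p) + val (coli s) Ei True (?T ` Aset m q)"
  proof -
    have "isolated Ei (Aset m p) = {}" unfolding Aset_def using noiso_A[OF m] .
    moreover have "isolated Ei (?T ` Aset m q) = {}" unfolding TA using noiso_A[OF m] .
    moreover have "Aset m p \<inter> ?T ` Aset m q = {}" unfolding TA Aset_def by auto
    moreover have "\<forall>a\<in>Aset m p. \<forall>b\<in>?T ` Aset m q. \<not> Ei a b" unfolding TA Aset_def Ei_def by auto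
    ultimately show ?thesis using milnor[of "Aset m p" "?T ` Aset m q"] fin_Aset by blast
  qed
  then show ?thesis unfolding U val_shift[OF fin_Aset] .
qed

lemma boundsA:
  assumes m: "2 \<le> m"
  shows "val (coli s) Ei True (Aset m p) \<le> int p * of_bool (odd (int m) = s \<and> s) + 4"
    and "- (int p * of_bool (odd (int m) = (\<not> s) \<and> \<not> s)) \<le> val (coli s) Ei True (Aset m p)"
proof -
  have isoA: "isolated Ei (Aset m p) = {}" unfolding Aset_def using noiso_A[OF m] .
  have isoB: "isolated Ei (Bset m p) = {}" unfolding Bset_def using noiso_B[OF m] .
  have F4: "\<forall>x\<in>U. coli s' x \<longrightarrow> Fv U x \<le> 4" for U s' unfolding Fv_def by auto
  have LA: "val (coli s') Ei True (Aset m p) \<le> int (card (EBs s' (Aset m p))) + 4" for s'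
    using pot[OF fin_Aset isoA, of s'] F4 by auto
  have LB: "val (coli s') Ei True (Bset m p) \<le> int (card (EBs s' (Bset m p))) + 4" for s'
    using pot[OF fin_Bset isoB, of s'] F4 by auto
  have RA: "val (coli s') Ei False (Aset m p) \<le> int (card (EBs s' (Aset m p)))" for s'
    using pot[OF fin_Aset isoA, of s'] by auto
  have RB: "val (coli s') Ei False (Bset m p) \<le> int (card (EBs s' (Bset m p)))" for s'
    using pot[OF fin_Bset isoB, of s'] by auto
  have m1: "1 \<le> m" using m by simp
  show "val (coli s) Ei True (Aset m p) \<le> int p * of_bool (odd (int m) = s \<and> s) + 4"
  proof (cases "odd (int m) = s \<and> s")
    case True then show ?thesis using LA[of s] EBs_A[OF m1, of s p] by simp
  next
    case False
    then show ?thesis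
    proof (cases "odd (int m) = s")
      case True
      then have "\<not> s" using False by simp
      then show ?thesis using LB[of s] EBs_B[OF m1, of s p] val_AB[of s True m p] False by simp
    next
      case False
      then show ?thesis using LA[of s] EBs_A[OF m1, of s p] by simp
    qed
  qed
  have sw: "val (coli s) Ei True U = - val (coli (\<not> s)) Ei False U" if "finite U" for U
  proof -
    have "(\<lambda>v. \<not> coli (\<not> s) v) = coli s" unfolding coli_def by auto
    then show ?thesis using val_swap[OF that, of "coli (\<not> s)" Ei True] by simp
  qed
  show "- (int p * of_bool (odd (int m) = (\<not> s) \<and> \<not> s)) \<le> val (coli s) Ei True (Aset m p)"
    using sw[OF fin_Aset] RA[of "\<not> s"] RB[of "\<not> s"] val_AB[of "\<not> s" False m p]
      EBs_A[OF m1, of "\<not> s" p] EBs_B[OF m1, of "\<not> s" p]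
    by (cases s; cases "odd (int m)") auto
qed


lemma subadd_mult:
  fixes b :: "nat \<Rightarrow> real"
  assumes sub: "\<And>p q. b (p + q) \<le> b p + b q"
  shows "b (q * m + r) \<le> real q * b m + b r"
proof (induction q)
  case 0 then show ?case by simp
next
  case (Suc q)
  have "b (Suc q * m + r) = b (m + (q * m + r))" by (simp add: add.assoc)
  also have "\<dots> \<le> b m + b (q * m + r)" by (rule sub)
  also have "\<dots> \<le> b m + (real q * b m + b r)" using Suc by simp
  finally show ?case by (simp add: algebra_simps)
qed

lemma fekete:
  fixes b :: "nat \<Rightarrow> real"
  assumes sub: "\<And>p q. b (p + q) \<le> b p + b q" and nn: "\<And>p. 0 \<le> b p"
  shows "convergent (\<lambda>p. b p / real p)"
proof -
  define S where "S = (\<lambda>p. b p / real p) ` {1..}"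
  have Sne: "S \<noteq> {}" unfolding S_def by auto
  have Sbdd: "bdd_below S" unfolding S_def using nn by (intro bdd_belowI[of _ 0]) auto
  define L where "L = Inf S"
  have low: "L \<le> b p / real p" if "1 \<le> p" for p
    unfolding L_def S_def using Sbdd that by (intro cInf_lower) (auto simp: S_def)
  have "(\<lambda>p. b p / real p) \<longlonglongrightarrow> L"
  proof (rule LIMSEQ_I)
    fix r :: real assume r: "0 < r"
    have "Inf S < L + r / 2" unfolding L_def using r by simp
    then obtain z where z: "z \<in> S" "z < L + r / 2" using cInf_less_iff[OF Sne Sbdd] by blast
    then obtain m where m: "1 \<le> m" "b m / real m < L + r / 2" unfolding S_def by auto
    define C where "C = (\<Sum>t<m. b t)"
    have Cb: "b t \<le> C" if "t < m" for t
      unfolding C_def using that nn by (intro member_le_sum) auto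
    have C0: "0 \<le> C" unfolding C_def using nn by (simp add: sum_nonneg)
    define N where "N = nat \<lceil>2 * C / r\<rceil> + 1"
    show "\<exists>no. \<forall>n\<ge>no. norm (b n / real n - L) < r"
    proof (intro exI allI impI)
      fix n assume n: "N \<le> n"
      have n1: "1 \<le> n" using n unfolding N_def by simp
      have npos: "0 < real n" using n1 by simp
      have "real n > 2 * C / r"
      proof -
        have "2 * C / r \<le> real (nat \<lceil>2 * C / r\<rceil>)" by linarith
        also have "\<dots> < real N" unfolding N_def by simp
        also have "\<dots> \<le> real n" using n by simp
        finally show ?thesis .
      qed
      then have Cn: "C / real n < r / 2" using r npos by (simp add: field_simps)
      define q where "q = n div m"
      have dec: "n = q * m + n mod m" unfolding q_def by simp
      have "b n \<le> real q * b m + b (n mod m)" using subadd_mult[OF sub, of q m "n mod m"] dec by simp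
      also have "\<dots> \<le> real q * b m + C" using Cb[of "n mod m"] m(1) by simp
      finally have bn: "b n \<le> real q * b m + C" .
      have "real q * real m \<le> real n" using dec by (metis le_add1 of_nat_le_iff of_nat_mult)
      then have "real q \<le> real n / real m" using m(1) by (simp add: field_simps)
      then have "real q * b m \<le> real n / real m * b m" using nn[of m] by (rule mult_right_mono)
      then have "b n \<le> real n * (b m / real m) + C" using bn by simp
      then have "b n / real n \<le> b m / real m + C / real n" using npos by (simp add: field_simps)
      then have up: "b n / real n < L + r" using m(2) Cn by linarith
      have "L \<le> b n / real n" using low[OF n1] .
      then show "norm (b n / real n - L) < r" using up by simp
    qed
  qed
  then show ?thesis unfolding convergent_def by blast
qed


lemma conv_lemma:
  fixes a :: "nat \<Rightarrow> int"
  assumes sub: "\<And>p q. a (p + q) \<le> a p + a q" and lo: "\<And>p. - int p \<le> a p"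
  shows "(\<lambda>p. real_of_int (a p) / real p) \<longlonglongrightarrow> lim (\<lambda>p. real_of_int (a p) / real p)"
proof -
  define b where "b p = real_of_int (a p) + real p" for p
  have "convergent (\<lambda>p. b p / real p)"
  proof (rule fekete)
    show "b (p + q) \<le> b p + b q" for p q unfolding b_def using sub[of p q] by simp
    show "0 \<le> b p" for p unfolding b_def using lo[of p] by linarith
  qed
  then obtain L where L: "(\<lambda>p. b p / real p) \<longlonglongrightarrow> L" unfolding convergent_def by blast
  have "(\<lambda>p. b p / real p - 1) \<longlonglongrightarrow> L - 1" using L by (intro tendsto_intros)
  moreover have "eventually (\<lambda>p. b p / real p - 1 = real_of_int (a p) / real p) sequentially"
    unfolding eventually_sequentially
    by (rule exI[of _ 1]) (auto simp: b_def field_simps)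
  ultimately have "(\<lambda>p. real_of_int (a p) / real p) \<longlonglongrightarrow> L - 1" by (rule Lim_transform_eventually)
  then show ?thesis using limI by metis
qed

lemma Ls_copies_big:
  assumes m: "2 \<le> nat \<bar>n\<bar>"
  shows "Ls (copies p (segment n)) = val (coli (0 < n)) Ei True (Aset (nat \<bar>n\<bar>) p)"
proof -
  let ?m = "nat \<bar>n\<bar>"
  let ?V = "{0..<p} \<times> {1..?m}"
  let ?bl = "\<lambda>(c::nat, v::nat). if 0 < n then odd v else even v"
  let ?E = "\<lambda>(c::nat, v::nat) (d, w). c = d \<and> (v = w + 1 \<or> w = v + 1)"
  have cp: "copies p (segment n) = (?V, ?bl, ?E)"
    unfolding copies_def segment_def by simp
  have iso: "isolated ?E ?V = {}"
  proof (rule equals0I)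
    fix v assume v: "v \<in> isolated ?E ?V"
    obtain c i where ci: "v = (c, i)" by (cases v)
    have vin: "c < p" "1 \<le> i" "i \<le> ?m" using v unfolding ci isolated_def by auto
    have h: "\<forall>w \<in> ?V. \<not> ?E (c, i) w" using v unfolding ci isolated_def by auto
    show False
    proof (cases "i + 1 \<le> ?m")
      case True
      then have "(c, i + 1) \<in> ?V" using vin by auto
      then show False using h by auto
    next
      case False
      then have "(c, i - 1) \<in> ?V" using vin m by auto
      moreover have "i = (i - 1) + 1" using vin by simp
      ultimately show False using h by force
    qed
  qed
  have ic: "iso_credit (copies p (segment n)) = 0"
    unfolding cp iso_credit_def prod.case iso by simp
  have "Ls (copies p (segment n)) = val ?bl ?E True ?V"
    unfolding Ls_def ic unfolding cp prod.case iso val_def by simp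
  also have "\<dots> = val (coli (0 < n)) Ei True ((\<lambda>v. (fst v, int (snd v))) ` ?V)"
    by (rule val_iso[symmetric]) (auto simp: inj_on_def Ei_def coli_def)
  also have "(\<lambda>v. (fst v, int (snd v))) ` ?V = Aset ?m p"
  proof
    show "(\<lambda>v. (fst v, int (snd v))) ` ?V \<subseteq> Aset ?m p" unfolding Aset_def by auto
    show "Aset ?m p \<subseteq> (\<lambda>v. (fst v, int (snd v))) ` ?V"
    proof
      fix v assume v: "v \<in> Aset ?m p"
      show "v \<in> (\<lambda>v. (fst v, int (snd v))) ` ?V"
        by (rule image_eqI[where x = "(fst v, nat (snd v))"]) (use v in \<open>auto simp: Aset_def\<close>)
    qed
  qed
  finally show ?thesis .
qed


lemma bival_empty: "bival bl E k lft {} = 0"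
  by (cases k) auto

lemma Ls_zero: "Ls (copies p (segment 0)) = 0"
  by (simp add: Ls_def copies_def segment_def iso_credit_def isolated_def bival_empty)

lemma Ls_one:
  assumes "\<bar>n\<bar> = 1"
  shows "Ls (copies p (segment n)) = (if 0 < n then int p else - int p)"
proof -
  have m: "nat \<bar>n\<bar> = 1" using assms by simp
  let ?V = "{0..<p} \<times> {1::nat}"
  let ?bl = "\<lambda>(c::nat, v::nat). if 0 < n then odd v else even v"
  let ?E = "\<lambda>(c::nat, v::nat) (d, w). c = d \<and> (v = w + 1 \<or> w = v + 1)"
  have cp: "copies p (segment n) = (?V, ?bl, ?E)"
    unfolding copies_def segment_def m by simp
  have iso: "isolated ?E ?V = ?V" unfolding isolated_def by auto
  have c1: "card {v \<in> ?V. ?bl v} = (if 0 < n then p else 0)"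
  proof (cases "0 < n")
    case True
    then have "{v \<in> ?V. ?bl v} = ?V" by auto
    then show ?thesis using True by (simp add: card_cartesian_product)
  next
    case False
    then have "{v \<in> ?V. ?bl v} = {}" by auto
    then show ?thesis using False by simp
  qed
  have c2: "card {v \<in> ?V. \<not> ?bl v} = (if 0 < n then 0 else p)"
  proof (cases "0 < n")
    case True
    then have "{v \<in> ?V. \<not> ?bl v} = {}" by auto
    then show ?thesis using True by simp
  next
    case False
    then have "{v \<in> ?V. \<not> ?bl v} = ?V" by auto
    then show ?thesis using False by (simp add: card_cartesian_product)
  qed
  show ?thesis
    unfolding Ls_def iso_credit_def cp prod.case iso c1 c2 by (simp add: bival_empty)
qed

theorem mainTheorem14:
  fixes n :: int
  shows "(even n \<longrightarrow> mean (segment n) = 0)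
       \<and> (odd n \<and> n \<ge> 0 \<longrightarrow> 0 \<le> mean (segment n) \<and> mean (segment n) \<le> 1)
       \<and> (odd n \<and> n \<le> 0 \<longrightarrow> -1 \<le> mean (segment n) \<and> mean (segment n) \<le> 0)"
proof -
  define m where "m = nat \<bar>n\<bar>"
  define a where "a p = Ls (copies p (segment n))" for p
  define X where "X p = real_of_int (a p) / real p" for p
  have mean_eq: "mean (segment n) = lim X" unfolding mean_def X_def a_def ..
  consider (z) "n = 0" | (one) "\<bar>n\<bar> = 1" | (big) "2 \<le> m" unfolding m_def by linarith
  then show ?thesis
  proof cases
    case z
    have "X = (\<lambda>p. 0)" unfolding X_def a_def z Ls_zero by simp
    then have "lim X = 0" using limI[OF tendsto_const] by simp
    then show ?thesis using z mean_eq by simp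
  next
    case one
    define sg where "sg = (if 0 < n then 1 else - 1 :: real)"
    have "eventually (\<lambda>p. sg = X p) sequentially"
      unfolding eventually_sequentially X_def a_def Ls_one[OF one] sg_def
      by (rule exI[of _ 1]) auto
    then have "X \<longlonglongrightarrow> sg" by (rule Lim_transform_eventually[OF tendsto_const])
    then have "mean (segment n) = sg" using mean_eq limI by simp
    moreover have "odd n" using one by presburger
    ultimately show ?thesis unfolding sg_def using one by auto
  next
    case big
    let ?s = "0 < n"
    have aeq: "a p = val (coli ?s) Ei True (Aset m p)" for p
      unfolding a_def m_def using Ls_copies_big big unfolding m_def by blast
    have up: "a p \<le> int p * of_bool (odd (int m) = ?s \<and> ?s) + 4" for p
      unfolding aeq using boundsA(1)[OF big] .
    have lo: "- (int p * of_bool (odd (int m) = (\<not> ?s) \<and> \<not> ?s)) \<le> a p" for p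
      unfolding aeq using boundsA(2)[OF big] .
    have par: "odd (int m) = odd n" unfolding m_def by (cases "n \<ge> 0") auto
    show ?thesis
    proof (cases "even n")
      case True
      have b: "0 \<le> a p \<and> a p \<le> 4" for p using up[of p] lo[of p] True par by (cases ?s) auto
      have "X \<longlonglongrightarrow> 0"
      proof (rule tendsto_sandwich[of "\<lambda>p. 0" X sequentially "\<lambda>p. 4 / real p"])
        show "eventually (\<lambda>p. 0 \<le> X p) sequentially" unfolding X_def using b by auto
        show "eventually (\<lambda>p. X p \<le> 4 / real p) sequentially"
          unfolding X_def eventually_sequentially
          by (rule exI[of _ 1]) (use b in \<open>auto simp: divide_right_mono\<close>)
        show "(\<lambda>p. 0) \<longlonglongrightarrow> (0::real)" by simp
        show "(\<lambda>p. 4 / real p) \<longlonglongrightarrow> (0::real)" by (rule lim_const_over_n)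
      qed
      then show ?thesis using True mean_eq limI by simp
    next
      case False
      have sub: "a (p + q) \<le> a p + a q" for p q unfolding aeq using subadd[OF big] .
      have lo': "- int p \<le> a p" for p using lo[of p] by (cases ?s; cases "odd (int m)") auto
      have conv: "X \<longlonglongrightarrow> lim X" unfolding X_def using conv_lemma[of a] sub lo' by blast
      show ?thesis
      proof (cases "0 < n")
        case True
        have b: "0 \<le> a p \<and> a p \<le> int p + 4" for p using up[of p] lo[of p] False par True by auto
        have "0 \<le> lim X"
          by (rule LIMSEQ_le_const[OF conv]) (use b in \<open>auto simp: X_def\<close>)
        moreover have "lim X \<le> 1"
        proof (rule LIMSEQ_le[OF conv])
          show "(\<lambda>p. 1 + 4 / real p) \<longlonglongrightarrow> (1::real)"
            using tendsto_add[OF tendsto_const lim_const_over_n, of 1 4] by simp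
          show "\<exists>N. \<forall>p\<ge>N. X p \<le> 1 + 4 / real p"
          proof (intro exI allI impI)
            fix p :: nat assume p: "1 \<le> p"
            have "real_of_int (a p) \<le> real p + 4" using b[of p] by linarith
            then have "real_of_int (a p) / real p \<le> (real p + 4) / real p" using p by (simp add: divide_right_mono)
            also have "\<dots> = 1 + 4 / real p" using p by (simp add: field_simps)
            finally show "X p \<le> 1 + 4 / real p" unfolding X_def .
          qed
        qed
        ultimately show ?thesis using mean_eq False True by simp
      next
        case neg: False
        have b: "- int p \<le> a p \<and> a p \<le> 4" for p using up[of p] lo[of p] False par neg by auto
        have "-1 \<le> lim X"
        proof (rule LIMSEQ_le_const[OF conv])
          show "\<exists>N. \<forall>p\<ge>N. -1 \<le> X p"
          proof (intro exI allI impI)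
            fix p :: nat assume p: "1 \<le> p"
            have h: "- real p \<le> real_of_int (a p)" using b[of p] by linarith
            have pp: "0 < real p" using p by simp
            show "-1 \<le> X p" unfolding X_def using h pp by (simp add: field_simps)
          qed
        qed
        moreover have "lim X \<le> 0"
        proof (rule LIMSEQ_le[OF conv])
          show "(\<lambda>p. 4 / real p) \<longlonglongrightarrow> (0::real)" by (rule lim_const_over_n)
          show "\<exists>N. \<forall>p\<ge>N. X p \<le> 4 / real p"
          proof (intro exI allI impI)
            fix p :: nat assume p: "1 \<le> p"
            have "real_of_int (a p) \<le> 4" using b[of p] by linarith
            then show "X p \<le> 4 / real p" unfolding X_def using p by (simp add: divide_right_mono)
          qed
        qed
        moreover have "n < 0" using neg False by presburger
        ultimately show ?thesis using mean_eq False by simp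
      qed
    qed
  qed
qed


end
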